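(* Let $\Lambda\subset\mathbb C$ be the hexagonal lattice with minimal distance $\sqrt3$ between distinct points, containing $0$ (the centers of a tiling of the plane by regular hexagons of side $1$). For $n\ge2$ let $\lambda_1=0,\lambda_2,\dots,\lambda_n$ be $n$ distinct points of $\Lambda$ of smallest moduli, $0=|\lambda_1|\le\cdots\le|\lambda_n|$, and $A_0=\mathrm{Diag}(\lambda_1,\dots,\lambda_n)$ with eigenpairs $(\lambda_i,e_i)$. Then \[ \mu(A_0)^2=\max_i\mu(A_0,\lambda_i,e_i)^2\le\frac{\sqrt3\,\pi}{27}\,n^2+o(n^2)\qquad(n\to\infty). \]
   Context: For $Av=\lambda v$, $A_{\lambda,v}=\Pi_{v^\perp}(\lambda I_n-A)|_{v^\perp}$ and $\mu(A,\lambda,v)=\max(1,\|A\|_F\|A_{\lambda,v}^{-1}\|)$; for a diagonal matrix with distinct diagonal entries this gives $\max_i\mu(A_0,\lambda_i,e_i)^2=\max\big(1,(|\lambda_1|^2+\cdots+|\lambda_n|^2)\max_{i\ne j}|\lambda_i-\lambda_j|^{-2}\big)$. $e_i$ is the $i$-th canonical basis vector. *)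

theory Defs
  imports Complex_Main "HOL-Library.Landau_Symbols"
begin

text \<open>Vectors of C^n are represented as functions nat => complex (only the
  coordinates i < n matter); n x n complex matrices as nat => nat => complex.\<close>

definition cinner :: "nat \<Rightarrow> (nat \<Rightarrow> complex) \<Rightarrow> (nat \<Rightarrow> complex) \<Rightarrow> complex" where
  "cinner n x y = (\<Sum>i<n. x i * cnj (y i))"

definition vnorm :: "nat \<Rightarrow> (nat \<Rightarrow> complex) \<Rightarrow> real" where
  "vnorm n x = sqrt (\<Sum>i<n. (cmod (x i))\<^sup>2)"

definition frob_norm :: "nat \<Rightarrow> (nat \<Rightarrow> nat \<Rightarrow> complex) \<Rightarrow> real" where
  "frob_norm n A = sqrt (\<Sum>i<n. \<Sum>j<n. (cmod (A i j))\<^sup>2)"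

definition mat_vec :: "nat \<Rightarrow> (nat \<Rightarrow> nat \<Rightarrow> complex) \<Rightarrow> (nat \<Rightarrow> complex) \<Rightarrow> (nat \<Rightarrow> complex)" where
  "mat_vec n A x = (\<lambda>i. if i < n then (\<Sum>j<n. A i j * x j) else 0)"

definition perp_space :: "nat \<Rightarrow> (nat \<Rightarrow> complex) \<Rightarrow> (nat \<Rightarrow> complex) set" where
  "perp_space n v = {x. (\<forall>i\<ge>n. x i = 0) \<and> cinner n x v = 0}"

definition proj_perp :: "nat \<Rightarrow> (nat \<Rightarrow> complex) \<Rightarrow> (nat \<Rightarrow> complex) \<Rightarrow> (nat \<Rightarrow> complex)" where
  "proj_perp n v x = (\<lambda>i. if i < n then x i - (cinner n x v / cinner n v v) * v i else 0)"

text \<open>The map A_{lambda,v} = Pi_{v^perp} (lambda I - A) restricted to v^perp.\<close>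
definition A_restr :: "nat \<Rightarrow> (nat \<Rightarrow> nat \<Rightarrow> complex) \<Rightarrow> complex \<Rightarrow> (nat \<Rightarrow> complex)
    \<Rightarrow> (nat \<Rightarrow> complex) \<Rightarrow> (nat \<Rightarrow> complex)" where
  "A_restr n A lam v x = proj_perp n v (\<lambda>i. lam * x i - mat_vec n A x i)"

definition inv_op_norm :: "nat \<Rightarrow> (nat \<Rightarrow> nat \<Rightarrow> complex) \<Rightarrow> complex \<Rightarrow> (nat \<Rightarrow> complex) \<Rightarrow> real" where
  "inv_op_norm n A lam v =
     Sup {vnorm n (the_inv_into (perp_space n v) (A_restr n A lam v) y) / vnorm n y
          | y. y \<in> perp_space n v \<and> vnorm n y \<noteq> 0}"

definition mu :: "nat \<Rightarrow> (nat \<Rightarrow> nat \<Rightarrow> complex) \<Rightarrow> complex \<Rightarrow> (nat \<Rightarrow> complex) \<Rightarrow> real" where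
  "mu n A lam v = max 1 (frob_norm n A * inv_op_norm n A lam v)"

definition diag_mat :: "(nat \<Rightarrow> complex) \<Rightarrow> (nat \<Rightarrow> nat \<Rightarrow> complex)" where
  "diag_mat l = (\<lambda>i j. if i = j then l i else 0)"

definition unit_vec :: "nat \<Rightarrow> (nat \<Rightarrow> complex)" where
  "unit_vec i = (\<lambda>j. if j = i then 1 else 0)"

definition hex_lattice :: "complex set" where
  "hex_lattice = {complex_of_real (sqrt 3) * (of_int a + of_int b * cis (pi / 3)) | a b. True}"

definition smallest_hex_points :: "nat \<Rightarrow> (nat \<Rightarrow> complex) \<Rightarrow> bool" where
  "smallest_hex_points n l \<longleftrightarrow>
     (\<forall>i<n. l i \<in> hex_lattice) \<and> inj_on l {..<n} \<and> l 0 = 0 \<and>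
     (\<forall>i j. i \<le> j \<longrightarrow> j < n \<longrightarrow> cmod (l i) \<le> cmod (l j)) \<and>
     (\<forall>z\<in>hex_lattice. z \<notin> l ` {..<n} \<longrightarrow> cmod (l (n - 1)) \<le> cmod z)"

end

theory Submission
  imports Defs
begin

definition hg :: "int \<Rightarrow> int \<Rightarrow> complex" where
  "hg a b = complex_of_real (sqrt 3) * (of_int a + of_int b * cis (pi / 3))"

lemma hg_Re: "Re (hg a b) = sqrt 3 * (a + b / 2)"
  by (simp add: hg_def cis.code cos_60 sin_60)
lemma hg_Im: "Im (hg a b) = 3 * b / 2"
  by (simp add: hg_def cis.code cos_60 sin_60)

lemma hg_norm2: "(cmod (hg a b))\<^sup>2 = 3 * (real_of_int a ^ 2 + a * b + b ^ 2)"
  unfolding cmod_power2 hg_Re hg_Im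
  by (simp add: power2_eq_square algebra_simps)

lemma hg_diff: "hg a b - hg c d = hg (a - c) (b - d)"
  by (simp add: hg_def algebra_simps)

lemma form_pos: fixes a b :: int assumes "(a, b) \<noteq> (0, 0)" shows "a^2 + a*b + b^2 \<ge> 1"
proof -
  have "4 * (a^2 + a*b + b^2) = (2*a+b)^2 + 3 * b^2" by algebra
  moreover have "(2*a+b)^2 + 3 * b^2 > 0" using assms
    by (smt (verit) power2_less_eq_zero_iff prod.inject zero_le_power2)
  ultimately have "0 < 4 * (a^2 + a*b + b^2)" by (simp only:)
  hence "a^2 + a*b + b^2 > 0" by (simp add: zero_less_mult_iff)
  thus ?thesis by simp
qed

lemma hex_mem: "z \<in> hex_lattice \<longleftrightarrow> (\<exists>a b. z = hg a b)"
  by (auto simp: hex_lattice_def hg_def)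

lemma hex_dist: assumes "z \<in> hex_lattice" "w \<in> hex_lattice" "z \<noteq> w"
  shows "(cmod (z - w))\<^sup>2 \<ge> 3"
proof -
  obtain a b c d where z: "z = hg a b" and w: "w = hg c d" using assms hex_mem by metis
  have ne: "(a - c, b - d) \<noteq> (0, 0)" using assms(3) z w by auto
  have "(a-c)^2 + (a-c)*(b-d) + (b-d)^2 \<ge> 1" using form_pos[OF ne] .
  hence "real_of_int ((a-c)^2 + (a-c)*(b-d) + (b-d)^2) \<ge> 1" by linarith
  thus ?thesis unfolding z w hg_diff hg_norm2 by simp
qed

lemma hg_inj: "inj (\<lambda>(a, b). hg a b)"
proof (rule injI, clarify)
  fix a b c d assume h: "hg a b = hg c d"
  show "a = c \<and> b = d"
  proof (rule ccontr)
    assume "\<not> (a = c \<and> b = d)"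
    hence ne: "(a - c, b - d) \<noteq> (0, 0)" by auto
    have "(a-c)^2 + (a-c)*(b-d) + (b-d)^2 \<ge> 1" using form_pos[OF ne] .
    hence "real_of_int ((a-c)^2 + (a-c)*(b-d) + (b-d)^2) \<ge> 1" by linarith
    hence "(cmod (hg a b - hg c d))\<^sup>2 \<ge> 3" unfolding hg_diff hg_norm2 by simp
    thus False using h by simp
  qed
qed

lemma quad_le: fixes s t m :: int assumes "0 \<le> s" "s \<le> m" "0 \<le> t" "t \<le> m"
  shows "s^2 - s*t + t^2 \<le> m^2"
proof (cases "t \<le> s")
  case True
  have "t * (s - t) \<ge> 0" using True assms by simp
  moreover have "s^2 \<le> m^2" using assms by (simp add: power_mono)
  ultimately show ?thesis by (simp add: power2_eq_square algebra_simps)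
next
  case False
  have "s * (t - s) \<ge> 0" using False assms by simp
  moreover have "t^2 \<le> m^2" using assms by (simp add: power_mono)
  ultimately show ?thesis by (simp add: power2_eq_square algebra_simps)
qed

definition sq :: "nat \<Rightarrow> (int \<times> int) set" where
  "sq m = {1..int m} \<times> {1..int m}"

definition hexD :: "nat \<Rightarrow> (int \<times> int) set" where
  "hexD m = insert (0,0) ((\<lambda>(s,t). (s-t,t)) ` sq m \<union> (\<lambda>(t,r). (-t, t-r)) ` sq m
     \<union> (\<lambda>(s,r). (s,-r)) ` sq m)"

lemma card_sq: "card (sq m) = m * m"
  by (simp add: sq_def card_cartesian_product)

lemma finite_sq: "finite (sq m)" by (simp add: sq_def)

lemma card_hexD: "card (hexD m) = 3 * m * m + 1"
proof -
  let ?Q1 = "(\<lambda>(s,t). (s-t,t)) ` sq m"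
  let ?Q2 = "(\<lambda>(t,r). (-t, t-r)) ` sq m"
  let ?Q3 = "(\<lambda>(s,r). (s,-r)) ` sq m"
  have i1: "inj_on (\<lambda>(s,t). (s-t,t::int)) (sq m)" by (auto simp: inj_on_def)
  have i2: "inj_on (\<lambda>(t,r). (-t, t-r::int)) (sq m)" by (auto simp: inj_on_def)
  have i3: "inj_on (\<lambda>(s,r). (s,-r::int)) (sq m)" by (auto simp: inj_on_def)
  have c1: "card ?Q1 = m*m" using card_image[OF i1] card_sq by simp
  have c2: "card ?Q2 = m*m" using card_image[OF i2] card_sq by simp
  have c3: "card ?Q3 = m*m" using card_image[OF i3] card_sq by simp
  have d12: "?Q1 \<inter> ?Q2 = {}" by (auto simp: sq_def)
  have d3: "(?Q1 \<union> ?Q2) \<inter> ?Q3 = {}" by (auto simp: sq_def)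
  have f: "finite ?Q1" "finite ?Q2" "finite ?Q3" using finite_sq by auto
  have "card (?Q1 \<union> ?Q2 \<union> ?Q3) = 3*m*m"
    using card_Un_disjoint[OF _ _ d3] card_Un_disjoint[OF _ _ d12] f c1 c2 c3 by simp
  moreover have "(0,0) \<notin> ?Q1 \<union> ?Q2 \<union> ?Q3" by (auto simp: sq_def)
  ultimately show ?thesis unfolding hexD_def using f by simp
qed

lemma finite_hexD: "finite (hexD m)" using finite_sq by (simp add: hexD_def)

lemma hexD_form: assumes "(a, b) \<in> hexD m" shows "a^2 + a*b + b^2 \<le> int m ^ 2"
proof -
  have "m \<ge> 0" by simp
  from assms consider "a = 0 \<and> b = 0"
    | s t where "a = s - t" "b = t" "(s,t) \<in> sq m"
    | t r where "a = -t" "b = t - r" "(t,r) \<in> sq m"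
    | s r where "a = s" "b = -r" "(s,r) \<in> sq m"
    unfolding hexD_def by auto
  thus ?thesis
  proof cases
    case 1 thus ?thesis by simp
  next
    case (2 s t)
    have "s^2 - s*t + t^2 \<le> int m ^ 2" using 2 by (intro quad_le) (auto simp: sq_def)
    thus ?thesis unfolding 2(1,2) by (simp add: power2_eq_square algebra_simps)
  next
    case (3 t r)
    have "t^2 - t*r + r^2 \<le> int m ^ 2" using 3 by (intro quad_le) (auto simp: sq_def)
    thus ?thesis unfolding 3(1,2) by (simp add: power2_eq_square algebra_simps)
  next
    case (4 s r)
    have "s^2 - s*r + r^2 \<le> int m ^ 2" using 4 by (intro quad_le) (auto simp: sq_def)
    thus ?thesis unfolding 4(1,2) by (simp add: power2_eq_square algebra_simps)
  qed
qed

lemma hex_count: "\<exists>Z. Z \<subseteq> hex_lattice \<and> finite Z \<and> card Z = 3 * m * m + 1 \<and>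
   (\<forall>z\<in>Z. (cmod z)\<^sup>2 \<le> 3 * (real m)\<^sup>2)"
proof (intro exI conjI)
  let ?Z = "(\<lambda>(a, b). hg a b) ` hexD m"
  show "?Z \<subseteq> hex_lattice" using hex_mem by auto
  show "finite ?Z" using finite_hexD by simp
  show "card ?Z = 3 * m * m + 1" using card_image[OF inj_on_subset[OF hg_inj]] card_hexD by simp
  show "\<forall>z\<in>?Z. (cmod z)\<^sup>2 \<le> 3 * (real m)\<^sup>2"
  proof
    fix z assume "z \<in> ?Z"
    then obtain a b where ab: "(a,b) \<in> hexD m" "z = hg a b" by auto
    have "a^2 + a*b + b^2 \<le> int m ^ 2" using hexD_form[OF ab(1)] .
    hence "real_of_int (a^2 + a*b + b^2) \<le> real m ^ 2"
      by (metis of_int_le_iff of_int_of_nat_eq of_int_power)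
    thus "(cmod z)\<^sup>2 \<le> 3 * (real m)\<^sup>2" unfolding ab(2) hg_norm2 by simp
  qed
qed

lemma small_bound:
  assumes sm: "smallest_hex_points n l" and k: "k < n" and Z: "Z \<subseteq> hex_lattice" "finite Z" "card Z > k"
    and r: "\<forall>z\<in>Z. cmod z \<le> r"
  shows "cmod (l k) \<le> r"
proof (rule ccontr)
  assume "\<not> cmod (l k) \<le> r"
  hence big: "cmod (l k) > r" by simp
  have mono: "\<And>i j. i \<le> j \<Longrightarrow> j < n \<Longrightarrow> cmod (l i) \<le> cmod (l j)"
    and out: "\<And>z. z \<in> hex_lattice \<Longrightarrow> z \<notin> l ` {..<n} \<Longrightarrow> cmod (l (n - 1)) \<le> cmod z"
    using sm unfolding smallest_hex_points_def by auto
  have "Z \<subseteq> l ` {..<k}"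
  proof
    fix z assume zZ: "z \<in> Z"
    have lt: "cmod z < cmod (l k)" using r zZ big by force
    have "cmod (l k) \<le> cmod (l (n - 1))" using mono[of k "n - 1"] k by simp
    hence "z \<in> l ` {..<n}" using out[of z] zZ Z(1) lt by force
    then obtain j where j: "j < n" "z = l j" by auto
    have "j < k"
    proof (rule ccontr)
      assume "\<not> j < k"
      hence "cmod (l k) \<le> cmod (l j)" using mono[of k j] j by simp
      thus False using lt j by simp
    qed
    thus "z \<in> l ` {..<k}" using j by auto
  qed
  hence "card Z \<le> card (l ` {..<k})" by (simp add: card_mono)
  also have "\<dots> \<le> k" using card_image_le[of "{..<k}" l] by simp
  finally show False using Z(3) by simp
qed

lemma lk_bound:
  assumes sm: "smallest_hex_points n l" and k: "k < n"
  shows "(cmod (l k))\<^sup>2 \<le> real k + 6 * sqrt (real n) + 3"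
proof -
  define x where "x = sqrt (real k / 3)"
  define m where "m = nat \<lceil>x\<rceil>"
  have x0: "x \<ge> 0" by (simp add: x_def)
  have mx: "x \<le> real m" unfolding m_def by (rule real_nat_ceiling_ge)
  have mx2: "real m \<le> x + 1" unfolding m_def using of_int_ceiling_le_add_one[of x] x0 by simp
  have "x^2 \<le> (real m)^2" using mx x0 by (simp add: power_mono)
  hence "real k \<le> 3 * (real m)^2" by (simp add: x_def)
  hence "k \<le> 3 * m * m" by (simp add: power2_eq_square) (metis of_nat_le_iff of_nat_mult of_nat_numeral mult.assoc)
  obtain Z where Z: "Z \<subseteq> hex_lattice" "finite Z" "card Z = 3 * m * m + 1"
     "\<forall>z\<in>Z. (cmod z)\<^sup>2 \<le> 3 * (real m)\<^sup>2" using hex_count by blast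
  have "\<forall>z\<in>Z. cmod z \<le> sqrt (3 * (real m)\<^sup>2)" using Z(4) real_le_rsqrt by blast
  hence "cmod (l k) \<le> sqrt (3 * (real m)\<^sup>2)"
    using small_bound[OF sm k Z(1,2)] Z(3) \<open>k \<le> 3 * m * m\<close> by simp
  hence "(cmod (l k))\<^sup>2 \<le> 3 * (real m)\<^sup>2"
    by (metis norm_ge_zero power_mono real_sqrt_pow2 zero_le_mult_iff zero_le_numeral zero_le_power2)
  also have "\<dots> \<le> 3 * (x + 1)^2" using mx2 by (simp add: power_mono)
  also have "\<dots> = 3 * x^2 + 6 * x + 3" by (simp add: power2_eq_square algebra_simps)
  also have "3 * x^2 = real k" by (simp add: x_def)
  also have "x \<le> sqrt (real n)" unfolding x_def using k by simp
  finally show ?thesis by simp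
qed

lemma cinner_unit: assumes "i < n" shows "cinner n x (unit_vec i) = x i"
proof -
  have "(\<lambda>ia. x ia * cnj (unit_vec i ia)) = (\<lambda>ia. if ia = i then x ia else 0)"
    by (auto simp: unit_vec_def)
  hence "cinner n x (unit_vec i) = (\<Sum>ia<n. if ia = i then x ia else 0)"
    unfolding cinner_def by (rule arg_cong[where f="\<lambda>g. sum g {..<n}"])
  also have "\<dots> = x i" using assms by (simp add: sum.delta')
  finally show ?thesis .
qed

lemma mat_vec_diag: "mat_vec n (diag_mat l) x = (\<lambda>j. if j < n then l j * x j else 0)"
  by (rule ext) (simp add: mat_vec_def diag_mat_def if_distrib[where f="\<lambda>z. z * x _"] cong: if_cong)

lemma A_restr_diag: assumes "i < n"
  shows "A_restr n (diag_mat l) (l i) (unit_vec i) x = (\<lambda>j. if j < n \<and> j \<noteq> i then (l i - l j) * x j else 0)"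
  using assms unfolding A_restr_def proj_perp_def cinner_unit[OF assms]
  by (auto simp: mat_vec_diag unit_vec_def algebra_simps)

lemma perp_unit: "i < n \<Longrightarrow> x \<in> perp_space n (unit_vec i) \<longleftrightarrow> (\<forall>j\<ge>n. x j = 0) \<and> x i = 0"
  by (simp add: perp_space_def cinner_unit)

lemma inv_bound:
  assumes sm: "smallest_hex_points n l" and i: "i < n" and n2: "n \<ge> 2"
  shows "inv_op_norm n (diag_mat l) (l i) (unit_vec i) \<le> 1 / sqrt 3"
proof -
  let ?P = "perp_space n (unit_vec i)"
  let ?T = "A_restr n (diag_mat l) (l i) (unit_vec i)"
  have T: "\<And>x. ?T x = (\<lambda>j. if j < n \<and> j \<noteq> i then (l i - l j) * x j else 0)"
    using A_restr_diag[OF i] .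
  have lat: "\<And>j. j < n \<Longrightarrow> l j \<in> hex_lattice" and inj: "inj_on l {..<n}"
    using sm unfolding smallest_hex_points_def by auto
  have dist: "(cmod (l i - l j))\<^sup>2 \<ge> 3" if "j < n" "j \<noteq> i" for j
  proof -
    have "l i \<noteq> l j" using inj i that by (auto simp: inj_on_def)
    thus ?thesis using hex_dist lat i that by blast
  qed
  have ne0: "l i - l j \<noteq> 0" if "j < n" "j \<noteq> i" for j
    using dist[OF that] by auto
  have injT: "inj_on ?T ?P"
  proof (rule inj_onI)
    fix x y assume x: "x \<in> ?P" and y: "y \<in> ?P" and e: "?T x = ?T y"
    show "x = y"
    proof
      fix j
      show "x j = y j"
      proof (cases "j < n \<and> j \<noteq> i")
        case True
        have "(l i - l j) * x j = (l i - l j) * y j" using fun_cong[OF e, of j] True T by simp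
        thus ?thesis using ne0 True by simp
      next
        case False
        thus ?thesis using x y perp_unit[OF i] by (metis not_le)
      qed
    qed
  qed
  define j0 where "j0 = (if i = 0 then 1 else (0::nat))"
  have j0: "j0 < n" "j0 \<noteq> i" using n2 i by (auto simp: j0_def)
  have y0P: "unit_vec j0 \<in> ?P" using j0 perp_unit[OF i] by (auto simp: unit_vec_def)
  have "(\<lambda>k. (cmod (unit_vec j0 k))\<^sup>2) = (\<lambda>k. if k = j0 then 1 else 0)"
    by (auto simp: unit_vec_def)
  hence "vnorm n (unit_vec j0) = sqrt (\<Sum>k<n. if k = j0 then 1 else 0)"
    unfolding vnorm_def by (rule arg_cong[where f="\<lambda>g. sqrt (sum g {..<n})"])
  hence "vnorm n (unit_vec j0) = 1" using j0 by (simp add: sum.delta')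
  hence nonempty: "{vnorm n (the_inv_into ?P ?T y) / vnorm n y | y. y \<in> ?P \<and> vnorm n y \<noteq> 0} \<noteq> {}"
    using y0P by auto
  show ?thesis unfolding inv_op_norm_def
  proof (rule cSup_least[OF nonempty], clarify)
    fix y assume yP: "y \<in> ?P" and yn: "vnorm n y \<noteq> 0"
    define x where "x = (\<lambda>j. if j < n \<and> j \<noteq> i then y j / (l i - l j) else 0)"
    have xP: "x \<in> ?P" using perp_unit[OF i] by (auto simp: x_def)
    have Tx: "?T x = y"
    proof
      fix j show "?T x j = y j"
        using T ne0 yP perp_unit[OF i] by (auto simp: x_def)
    qed
    have inv: "the_inv_into ?P ?T y = x" by (rule the_inv_into_f_eq[OF injT Tx xP])
    have trm: "(cmod (x j))\<^sup>2 \<le> (cmod (y j))\<^sup>2 / 3" if "j < n" for j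
    proof (cases "j \<noteq> i")
      case True
      have "(cmod (x j))\<^sup>2 = (cmod (y j))\<^sup>2 / (cmod (l i - l j))\<^sup>2"
        using True that by (simp add: x_def norm_divide power_divide)
      also have "\<dots> \<le> (cmod (y j))\<^sup>2 / 3"
        using dist[OF that True] by (intro divide_left_mono) auto
      finally show ?thesis .
    qed (simp add: x_def)
    have "(\<Sum>j<n. (cmod (x j))\<^sup>2) \<le> (\<Sum>j<n. (cmod (y j))\<^sup>2 / 3)"
      by (rule sum_mono) (use trm in auto)
    hence "vnorm n x \<le> sqrt ((\<Sum>j<n. (cmod (y j))\<^sup>2) / 3)"
      unfolding vnorm_def by (simp add: sum_divide_distrib)
    also have "\<dots> = vnorm n y / sqrt 3" unfolding vnorm_def by (simp add: real_sqrt_divide)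
    finally have le: "vnorm n x \<le> vnorm n y / sqrt 3" .
    have pos: "vnorm n y > 0" using yn by (simp add: vnorm_def sum_nonneg order_less_le)
    show "vnorm n (the_inv_into ?P ?T y) / vnorm n y \<le> 1 / sqrt 3"
      unfolding inv using le pos by (simp add: divide_le_eq)
  qed
qed

lemma frob_diag: "(frob_norm n (diag_mat l))\<^sup>2 = (\<Sum>i<n. (cmod (l i))\<^sup>2)"
proof -
  have "\<And>i. i < n \<Longrightarrow> (\<Sum>j<n. (cmod (diag_mat l i j))\<^sup>2) = (cmod (l i))\<^sup>2"
  proof -
    fix i assume i: "i < n"
    have "(\<lambda>j. (cmod (diag_mat l i j))\<^sup>2) = (\<lambda>j. if i = j then (cmod (l i))\<^sup>2 else 0)"
      by (auto simp: diag_mat_def)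
    hence "(\<Sum>j<n. (cmod (diag_mat l i j))\<^sup>2) = (\<Sum>j<n. if i = j then (cmod (l i))\<^sup>2 else 0)"
      by (rule arg_cong[where f="\<lambda>g. sum g {..<n}"])
    thus "(\<Sum>j<n. (cmod (diag_mat l i j))\<^sup>2) = (cmod (l i))\<^sup>2" using i by simp
  qed
  hence "(\<Sum>i<n. \<Sum>j<n. (cmod (diag_mat l i j))\<^sup>2) = (\<Sum>i<n. (cmod (l i))\<^sup>2)"
    by (intro sum.cong) auto
  thus ?thesis unfolding frob_norm_def by (simp add: sum_nonneg)
qed

lemma max_sq: fixes x :: real assumes "x \<ge> 0" shows "(max 1 x)\<^sup>2 = max 1 (x\<^sup>2)"
proof (cases "x \<le> 1")
  case True
  hence "x\<^sup>2 \<le> 1" using assms by (simp add: power_le_one)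
  thus ?thesis using True by (simp add: max_def)
next
  case False
  hence "x\<^sup>2 \<ge> 1" by (simp add: one_le_power)
  thus ?thesis using False by (simp add: max_def)
qed

lemma mu_bound:
  assumes sm: "smallest_hex_points n l" and i: "i < n" and n2: "n \<ge> 2"
  shows "(mu n (diag_mat l) (l i) (unit_vec i))\<^sup>2 \<le> max 1 ((\<Sum>i<n. (cmod (l i))\<^sup>2) / 3)"
proof -
  let ?F = "frob_norm n (diag_mat l)"
  have F0: "?F \<ge> 0" unfolding frob_norm_def by (simp add: sum_nonneg)
  have "?F * inv_op_norm n (diag_mat l) (l i) (unit_vec i) \<le> ?F * (1 / sqrt 3)"
    using inv_bound[OF sm i n2] F0 by (rule mult_left_mono)
  hence "mu n (diag_mat l) (l i) (unit_vec i) \<le> max 1 (?F / sqrt 3)"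
    unfolding mu_def by auto
  moreover have "mu n (diag_mat l) (l i) (unit_vec i) \<ge> 0" unfolding mu_def by simp
  ultimately have "(mu n (diag_mat l) (l i) (unit_vec i))\<^sup>2 \<le> (max 1 (?F / sqrt 3))\<^sup>2"
    by (simp add: power_mono)
  also have "(max 1 (?F / sqrt 3))\<^sup>2 = max 1 ((?F / sqrt 3)\<^sup>2)"
    using F0 by (intro max_sq) simp
  also have "(?F / sqrt 3)\<^sup>2 = ?F\<^sup>2 / 3" by (simp add: power_divide)
  finally show ?thesis unfolding frob_diag .
qed

lemma sum_k: "(\<Sum>k<n. real k) \<le> (real n)\<^sup>2 / 2"
  by (induction n) (auto simp: power2_eq_square field_simps)

lemma sum_bound:
  assumes sm: "smallest_hex_points n l"
  shows "(\<Sum>i<n. (cmod (l i))\<^sup>2) \<le> (real n)\<^sup>2 / 2 + real n * (6 * sqrt (real n) + 3)"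
proof -
  have "(\<Sum>i<n. (cmod (l i))\<^sup>2) \<le> (\<Sum>k<n. real k + (6 * sqrt (real n) + 3))"
    using lk_bound[OF sm] by (intro sum_mono) (simp add: add.assoc)
  also have "\<dots> = (\<Sum>k<n. real k) + real n * (6 * sqrt (real n) + 3)"
    by (simp add: sum.distrib)
  finally show ?thesis using sum_k[of n] by linarith
qed

definition ferr :: "nat \<Rightarrow> real" where
  "ferr n = 1 + real n * (2 * sqrt (real n) + 1)"

lemma ferr_o: "ferr \<in> o(\<lambda>n. (real n)\<^sup>2)"
proof (rule landau_o.smallI)
  fix c :: real assume c: "c > 0"
  define N where "N = max 1 (nat \<lceil>(4 / c)\<^sup>2\<rceil>)"
  show "\<forall>\<^sub>F n in at_top. norm (ferr n) \<le> c * norm ((real n)\<^sup>2)"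
    unfolding eventually_at_top_linorder
  proof (intro exI allI impI)
    fix n assume nN: "n \<ge> N"
    have n1: "real n \<ge> 1" using nN by (simp add: N_def)
    have "nat \<lceil>(4 / c)\<^sup>2\<rceil> \<le> n" using nN unfolding N_def by simp
    hence "real (nat \<lceil>(4 / c)\<^sup>2\<rceil>) \<le> real n" by (simp only: of_nat_le_iff)
    hence "real n \<ge> (4 / c)\<^sup>2" using real_nat_ceiling_ge[of "(4/c)^2"] by linarith
    hence "sqrt (real n) \<ge> 4 / c" by (rule real_le_rsqrt)
    hence s4: "c * sqrt (real n) \<ge> 4" using c by (simp add: divide_le_eq mult.commute)
    have s1: "sqrt (real n) \<ge> 1" using n1 by simp
    have "ferr n \<le> 4 * real n * sqrt (real n)"
    proof -
      have "1 \<le> real n * sqrt (real n)" using n1 s1 by (metis mult_mono' mult_1 zero_le_one)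
      moreover have "real n \<le> real n * sqrt (real n)" using n1 s1 by simp
      ultimately show ?thesis unfolding ferr_def by (simp add: algebra_simps)
    qed
    also have "\<dots> \<le> real n * (c * sqrt (real n)) * sqrt (real n)"
      using s4 n1 s1 by (intro mult_right_mono) auto
    also have "\<dots> = c * (real n)\<^sup>2" by (simp add: power2_eq_square)
    finally have "ferr n \<le> c * (real n)\<^sup>2" .
    moreover have "ferr n \<ge> 0" by (simp add: ferr_def)
    ultimately show "norm (ferr n) \<le> c * norm ((real n)\<^sup>2)" by simp
  qed
qed

theorem mainTheorem4:
  shows "\<exists>f :: nat \<Rightarrow> real. f \<in> o(\<lambda>n. (real n)\<^sup>2) \<and>
    (\<forall>n l. n \<ge> 2 \<longrightarrow> smallest_hex_points n l \<longrightarrow>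
       Max {(mu n (diag_mat l) (l i) (unit_vec i))\<^sup>2 | i. i < n}
         \<le> sqrt 3 * pi / 27 * (real n)\<^sup>2 + f n)"
proof (intro exI conjI allI impI)
  show "ferr \<in> o(\<lambda>n. (real n)\<^sup>2)" by (rule ferr_o)
  fix n l assume n2: "n \<ge> 2" and sm: "smallest_hex_points n l"
  have s3: "sqrt 3 \<ge> 1.7" by (rule real_le_rsqrt) (simp add: power2_eq_square)
  have "1/2 \<le> pi / 6" using sin_x_le_x[of "pi/6"] sin_30 by simp
  hence pi3: "3 \<le> pi" by simp
  have "sqrt 3 * pi \<ge> 1.7 * 3" using s3 pi3 by (intro mult_mono) auto
  hence c: "1 / 6 \<le> sqrt 3 * pi / 27" by simp
  have B: "max 1 ((\<Sum>i<n. (cmod (l i))\<^sup>2) / 3) \<le> sqrt 3 * pi / 27 * (real n)\<^sup>2 + ferr n"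
  proof -
    have "(\<Sum>i<n. (cmod (l i))\<^sup>2) / 3 \<le> (real n)\<^sup>2 / 6 + real n * (2 * sqrt (real n) + 1)"
      using sum_bound[OF sm] by (simp add: field_simps)
    moreover have "(real n)\<^sup>2 / 6 \<le> sqrt 3 * pi / 27 * (real n)\<^sup>2"
      using mult_right_mono[OF c, of "(real n)\<^sup>2"] by simp
    moreover have "0 \<le> sqrt 3 * pi / 27 * (real n)\<^sup>2" by simp
    moreover have "0 \<le> real n * (2 * sqrt (real n) + 1)" by simp
    ultimately show ?thesis unfolding ferr_def by (intro max.boundedI) linarith+
  qed
  have fin: "finite {(mu n (diag_mat l) (l i) (unit_vec i))\<^sup>2 | i. i < n}" by simp
  have ne: "{(mu n (diag_mat l) (l i) (unit_vec i))\<^sup>2 | i. i < n} \<noteq> {}" using n2 by (auto intro!: exI[of _ 0])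
  show "Max {(mu n (diag_mat l) (l i) (unit_vec i))\<^sup>2 | i. i < n}
         \<le> sqrt 3 * pi / 27 * (real n)\<^sup>2 + ferr n"
    unfolding Max_le_iff[OF fin ne] using mu_bound[OF sm _ n2] B by (blast intro: order_trans)
qed

end
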